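(* Let $S$ be a numerical semigroup with minimal generators $e<a_1<\dots<a_t$ and blowup $B$. Let $f\in\operatorname{Ap}(B;e)$, $s=f+\min{\rm ord}(f;B^{\mathcal D})e$ and $s'=f+{\rm ord}(f;B^{\mathcal D})e$. Then $s,s'\in S$, and for all integers $k\ge0$: (1) ${\rm adj}(s+ke)=f$; (2) ${\rm d}_{\max}(s'+ke;S)=d(f;B^{\mathcal D})$.
   Context: A numerical semigroup is a submonoid of $(\mathbb N,+)$ with finite complement. An $S$-factorization of $n$ is $(c_0,\dots,c_t)\in\mathbb N^{t+1}$ with $c_0e+\sum c_ia_i=n$, of length $\sum c_i$. ${\rm ord}(n;S)$ is the maximal such length, and ${\rm d}_{\max}(n;S)$ is the number of factorizations of that length. Let $d_i=a_i-e$, let $B=\langle e,d_1,\dots,d_t\rangle$ be the blowup, and $\mathcal D=(e,d_1,\dots,d_t)$. A $B^{\mathcal D}$-factorization of $b\in B$ is $(x_0,\dots,x_t)\in\mathbb N^{t+1}$ with $x_0e+\sum x_id_i=b$, of length $\sum x_i$. $\min{\rm ord}(b;B^{\mathcal D})$ and ${\rm ord}(b;B^{\mathcal D})$ are the minimal and maximal lengths of such factorizations, and $d(b;B^{\mathcal D})$ is their number. $\operatorname{Ap}(B;e)=\{w\in B:w-e\notin B\}$. The adjustment is ${\rm adj}(u)=u-{\rm ord}(u;S)e$ for $u\in S$. *)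

theory Defs
  imports Main
begin

definition numerical_semigroup :: "nat set \<Rightarrow> bool" where
  "numerical_semigroup S \<longleftrightarrow> 0 \<in> S \<and> (\<forall>x\<in>S. \<forall>y\<in>S. x + y \<in> S) \<and> finite (UNIV - S)"

definition minimal_generators :: "nat set \<Rightarrow> nat set" where
  "minimal_generators S = {x \<in> S. x \<noteq> 0 \<and> \<not> (\<exists>y\<in>S. \<exists>z\<in>S. y \<noteq> 0 \<and> z \<noteq> 0 \<and> x = y + z)}"

definition factorizations :: "nat list \<Rightarrow> nat \<Rightarrow> nat list set" where
  "factorizations gs n = {c. length c = length gs \<and> (\<Sum>i<length gs. c ! i * gs ! i) = n}"

definition fact_len :: "nat list \<Rightarrow> nat" where
  "fact_len c = sum_list c"

definition gen_monoid :: "nat list \<Rightarrow> nat set" where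
  "gen_monoid gs = {n. factorizations gs n \<noteq> {}}"

definition ord_len :: "nat list \<Rightarrow> nat \<Rightarrow> nat" where
  "ord_len gs n = Max (fact_len ` factorizations gs n)"

definition min_ord_len :: "nat list \<Rightarrow> nat \<Rightarrow> nat" where
  "min_ord_len gs n = Min (fact_len ` factorizations gs n)"

definition num_fact :: "nat list \<Rightarrow> nat \<Rightarrow> nat" where
  "num_fact gs n = card (factorizations gs n)"

definition d_max :: "nat list \<Rightarrow> nat \<Rightarrow> nat" where
  "d_max gs n = card {c \<in> factorizations gs n. fact_len c = ord_len gs n}"

(* Apery set Ap(B;e) = {w in B. w - e notin B} (subtraction in the integers) *)
definition apery :: "nat set \<Rightarrow> nat \<Rightarrow> nat set" where
  "apery B e = {w \<in> B. \<not> (e \<le> w \<and> w - e \<in> B)}"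

(* Generator tuple (e, a_1, ..., a_t) of S and blowup tuple D = (e, a_1 - e, ..., a_t - e) *)
definition S_gens :: "nat \<Rightarrow> nat list \<Rightarrow> nat list" where
  "S_gens e as = e # as"

definition D_gens :: "nat \<Rightarrow> nat list \<Rightarrow> nat list" where
  "D_gens e as = e # map (\<lambda>x. x - e) as"

definition adj :: "nat \<Rightarrow> nat list \<Rightarrow> nat \<Rightarrow> int" where
  "adj e as u = int u - int (ord_len (S_gens e as) u) * int e"

end

theory Submission
  imports Defs
begin

lemma fact_cons:
  "(c0 # cs) \<in> factorizations (g # gs) n \<longleftrightarrow>
     length cs = length gs \<and> c0*g + (\<Sum>i<length gs. cs!i * gs!i) = n"
  unfolding factorizations_def
  by (simp only: length_Cons sum.lessThan_Suc_shift nth_Cons_0 nth_Cons_Suc mem_Collect_eq) auto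

lemma fact_cons_ex:
  assumes "c \<in> factorizations (g # gs) n"
  shows "\<exists>c0 cs. c = c0 # cs"
  using assms unfolding factorizations_def by (cases c) auto

lemma fin_fact:
  assumes "\<forall>g\<in>set gs. 0 < g"
  shows "finite (factorizations gs n)"
proof -
  have "factorizations gs n \<subseteq> {c. set c \<subseteq> {..n} \<and> length c = length gs}"
  proof
    fix c assume c: "c \<in> factorizations gs n"
    have "set c \<subseteq> {..n}"
    proof
      fix x assume "x \<in> set c"
      then obtain i where i: "i < length c" "c!i = x" by (auto simp: in_set_conv_nth)
      have li: "i < length gs" using c i unfolding factorizations_def by auto
      have "gs!i > 0" using assms li by auto
      hence "x \<le> c!i * gs!i" using i by simp
      also have "\<dots> \<le> (\<Sum>j<length gs. c!j * gs!j)"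
        by (rule member_le_sum) (use li in auto)
      also have "\<dots> = n" using c unfolding factorizations_def by auto
      finally show "x \<in> {..n}" by simp
    qed
    thus "c \<in> {c. set c \<subseteq> {..n} \<and> length c = length gs}"
      using c unfolding factorizations_def by auto
  qed
  moreover have "finite {c. set c \<subseteq> {..n} \<and> length c = length gs}"
    by (rule finite_lists_length_eq) simp
  ultimately show ?thesis by (rule finite_subset)
qed

lemma val_split:
  fixes e :: nat and as cs :: "nat list"
  assumes "length cs = length as" "\<forall>a\<in>set as. e \<le> a"
  shows "(\<Sum>i<length as. cs!i * as!i)
       = (\<Sum>i<length as. cs!i * (map (\<lambda>x. x-e) as)!i) + sum_list cs * e"
proof -
  have sl: "sum_list cs = (\<Sum>i<length as. cs!i)"
    using assms(1) by (simp add: sum_list_sum_nth atLeast0LessThan)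
  have "(\<Sum>i<length as. cs!i * as!i)
      = (\<Sum>i<length as. cs!i * (map (\<lambda>x. x-e) as)!i + cs!i * e)"
  proof (rule sum.cong)
    fix i assume "i \<in> {..<length as}"
    hence "e \<le> as!i" using assms(2) by auto
    have "(as!i - e) + e = as!i" using \<open>e \<le> as!i\<close> by simp
    hence "cs!i * as!i = cs!i * ((as!i - e) + e)" by simp
    also have "\<dots> = cs!i * (as!i - e) + cs!i * e" by (rule add_mult_distrib2)
    finally show "cs!i * as!i = cs!i * (map (\<lambda>x. x-e) as)!i + cs!i * e"
      using \<open>i \<in> {..<length as}\<close> by simp
  qed simp
  also have "\<dots> = (\<Sum>i<length as. cs!i * (map (\<lambda>x. x-e) as)!i) + sum_list cs * e"
    by (simp only: sum.distrib sl sum_distrib_right)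
  finally show ?thesis .
qed

lemma sum_in_S:
  fixes S :: "nat set" and g :: "'b \<Rightarrow> nat"
  assumes "0 \<in> S" "\<forall>x\<in>S. \<forall>y\<in>S. x + y \<in> S" "finite I" "\<forall>i\<in>I. g i \<in> S"
  shows "sum g I \<in> S"
  using assms(3,4) by (induction I rule: finite_induct) (use assms(1,2) in auto)

lemma mult_in_S:
  fixes S :: "nat set" and k :: nat
  assumes "0 \<in> S" "\<forall>x\<in>S. \<forall>y\<in>S. x + y \<in> S" "a \<in> S"
  shows "k * a \<in> S"
  by (induction k) (use assms in auto)

theorem proposition3p4:
  fixes S :: "nat set" and e :: nat and as :: "nat list" and f :: nat
  assumes "numerical_semigroup S"
    and "sorted_wrt (<) (e # as)"
    and "set (e # as) = minimal_generators S"
    and "f \<in> apery (gen_monoid (D_gens e as)) e"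
  shows "f + min_ord_len (D_gens e as) f * e \<in> S
       \<and> f + ord_len (D_gens e as) f * e \<in> S
       \<and> (\<forall>k::nat. adj e as (f + min_ord_len (D_gens e as) f * e + k * e) = int f)
       \<and> (\<forall>k::nat. d_max (S_gens e as) (f + ord_len (D_gens e as) f * e + k * e)
                     = num_fact (D_gens e as) f)"
proof -
  define D where "D = D_gens e as"
  define SG where "SG = S_gens e as"
  define F where "F = factorizations D f"
  define ds where "ds = map (\<lambda>x. x-e) as"
  have D: "D = e # ds" unfolding D_def D_gens_def ds_def by simp
  have SG: "SG = e # as" unfolding SG_def S_gens_def by simp
  have S0: "0 \<in> S" and Sadd: "\<forall>x\<in>S. \<forall>y\<in>S. x + y \<in> S"
    using assms(1) unfolding numerical_semigroup_def by auto
  have gensS: "set (e # as) \<subseteq> S" using assms(3) unfolding minimal_generators_def by auto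
  have e0: "e > 0" using assms(3) unfolding minimal_generators_def by auto
  have eas: "\<forall>a\<in>set as. e < a" using assms(2) by simp
  have eas': "\<forall>a\<in>set as. e \<le> a" using eas by auto
  have Dpos: "\<forall>g\<in>set D. 0 < g" using e0 eas unfolding D ds_def by auto
  have finF: "finite F" unfolding F_def by (rule fin_fact[OF Dpos])
  have fB: "F \<noteq> {}" using assms(4) unfolding F_def D_def apery_def gen_monoid_def by auto
  have notB: "\<not> (e \<le> f \<and> factorizations D (f - e) \<noteq> {})"
    using assms(4) unfolding D_def apery_def gen_monoid_def by auto
  have lds: "length ds = length as" unfolding ds_def by simp
  have Fform: "x = 0 # tl x \<and> length (tl x) = length as
      \<and> (\<Sum>i<length as. tl x!i * ds!i) = f" if xF: "x \<in> F" for x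
  proof -
    obtain c0 cs where x: "x = c0 # cs" using fact_cons_ex xF unfolding F_def D by blast
    have h: "length cs = length as" "c0*e + (\<Sum>i<length as. cs!i * ds!i) = f"
      using xF unfolding F_def D x fact_cons lds by auto
    have "c0 = 0"
    proof (rule ccontr)
      assume "c0 \<noteq> 0"
      hence ce: "c0*e = (c0-1)*e + e" by (cases c0) auto
      hence "(c0 - 1)*e + (\<Sum>i<length as. cs!i * ds!i) = f - e" "e \<le> f" using h(2) by linarith+
      hence "(c0 - 1) # cs \<in> factorizations D (f - e)" "e \<le> f"
        using h(1) unfolding D fact_cons lds by auto
      thus False using notB by auto
    qed
    thus ?thesis using x h by simp
  qed
  have G1: "fact_len c \<le> N" if cF: "c \<in> factorizations SG (f + N*e)" for c N
  proof (rule ccontr)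
    assume less: "\<not> fact_len c \<le> N"
    obtain c0 cs where c: "c = c0 # cs" using fact_cons_ex cF unfolding SG by blast
    have h: "length cs = length as" "c0*e + (\<Sum>i<length as. cs!i * as!i) = f + N*e"
      using cF unfolding SG c fact_cons by auto
    have vs: "(\<Sum>i<length as. cs!i * as!i) = (\<Sum>i<length as. cs!i * ds!i) + sum_list cs * e"
      unfolding ds_def by (rule val_split[OF h(1) eas'])
    define L where "L = c0 + sum_list cs"
    have L: "L > N" using less unfolding L_def c fact_len_def by simp
    have eq: "L*e + (\<Sum>i<length as. cs!i * ds!i) = f + N*e"
      using h(2) vs unfolding L_def by (simp add: algebra_simps)
    have eq2: "(L - N - 1)*e + (\<Sum>i<length as. cs!i * ds!i) = f - e" and "e \<le> f"
    proof -
      have "L = (L - N - 1) + 1 + N" using L by simp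
      hence "L*e = ((L - N - 1) + 1 + N)*e" by simp
      hence "L*e = (L - N - 1)*e + e + N*e" by (simp only: add_mult_distrib mult_1)
      thus "(L - N - 1)*e + (\<Sum>i<length as. cs!i * ds!i) = f - e" "e \<le> f" using eq by linarith+
    qed
    hence "(L - N - 1) # cs \<in> factorizations D (f - e)"
      unfolding D fact_cons lds using h(1) by simp
    thus False using notB \<open>e \<le> f\<close> by auto
  qed
  have G2: "(N - sum_list (tl x)) # tl x \<in> factorizations SG (f + N*e)
      \<and> fact_len ((N - sum_list (tl x)) # tl x) = N"
    if "x \<in> F" "fact_len x \<le> N" for x N
  proof -
    have fx: "x = 0 # tl x" "length (tl x) = length as" "(\<Sum>i<length as. tl x!i * ds!i) = f"
      using Fform[OF that(1)] by auto
    have sl: "sum_list (tl x) \<le> N" using that(2) fx(1) unfolding fact_len_def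
      by (cases x) auto
    have vs: "(\<Sum>i<length as. tl x!i * as!i) = f + sum_list (tl x) * e"
      using val_split[OF fx(2) eas'] fx(3) unfolding ds_def by simp
    have "(N - sum_list (tl x))*e + (f + sum_list (tl x) * e) = f + N*e"
      using sl by (simp add: diff_mult_distrib) 
    thus ?thesis unfolding SG fact_cons fact_len_def using fx(2) vs sl by simp
  qed
  have G3: "0 # tl c \<in> F \<and> c = (N - sum_list (tl c)) # tl c"
    if cF: "c \<in> factorizations SG (f + N*e)" and cL: "fact_len c = N" for c N
  proof -
    obtain c0 cs where c: "c = c0 # cs" using fact_cons_ex cF unfolding SG by blast
    have h: "length cs = length as" "c0*e + (\<Sum>i<length as. cs!i * as!i) = f + N*e"
      using cF unfolding SG c fact_cons by auto
    have vs: "(\<Sum>i<length as. cs!i * as!i) = (\<Sum>i<length as. cs!i * ds!i) + sum_list cs * e"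
      unfolding ds_def by (rule val_split[OF h(1) eas'])
    have N: "N = c0 + sum_list cs" using cL unfolding c fact_len_def by simp
    have "(\<Sum>i<length as. cs!i * ds!i) = f"
      using h(2) vs N by (simp add: algebra_simps)
    thus ?thesis unfolding F_def D fact_cons lds c using h(1) N by simp
  qed
  have ordN: "ord_len SG (f + N*e) = N" if "x \<in> F" "fact_len x \<le> N" for x N
    unfolding ord_len_def
  proof (rule Max_eqI)
    show "finite (fact_len ` factorizations SG (f + N * e))"
    proof -
      have "\<forall>g\<in>set SG. 0 < g" using e0 eas unfolding SG by auto
      from fin_fact[OF this] show ?thesis by simp
    qed
    show "\<And>y. y \<in> fact_len ` factorizations SG (f + N * e) \<Longrightarrow> y \<le> N" using G1 by auto
    show "N \<in> fact_len ` factorizations SG (f + N * e)"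
    proof -
      have "(N - sum_list (tl x)) # tl x \<in> factorizations SG (f + N*e)"
        and "fact_len ((N - sum_list (tl x)) # tl x) = N" using G2[OF that] by blast+
      thus ?thesis by (metis rev_image_eqI)
    qed
  qed
  have inS: "f + N*e \<in> S" if "x \<in> F" "fact_len x \<le> N" for x N
  proof -
    have c: "(N - sum_list (tl x)) # tl x \<in> factorizations SG (f + N*e)" using G2[OF that] by blast
    hence "f + N*e = (N - sum_list (tl x))*e + (\<Sum>i<length as. tl x!i * as!i)"
      unfolding SG fact_cons by simp
    moreover have "(N - sum_list (tl x))*e \<in> S" using mult_in_S[OF S0 Sadd] gensS by auto
    moreover have "(\<Sum>i<length as. tl x!i * as!i) \<in> S"
    proof (rule sum_in_S[OF S0 Sadd])
      show "\<forall>i\<in>{..<length as}. tl x!i * as!i \<in> S"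
      proof
        fix i assume "i \<in> {..<length as}"
        hence "as!i \<in> set as" by simp
        hence "as!i \<in> S" using gensS by auto
        thus "tl x!i * as!i \<in> S" by (rule mult_in_S[OF S0 Sadd])
      qed
    qed simp
    ultimately show ?thesis using Sadd by auto
  qed
  define m where "m = min_ord_len D f"
  define M where "M = ord_len D f"
  have mF: "m \<in> fact_len ` F" unfolding m_def min_ord_len_def F_def[symmetric]
    using finF fB by simp
  have MF: "M \<in> fact_len ` F" unfolding M_def ord_len_def F_def[symmetric]
    using finF fB by simp
  have Mge: "fact_len x \<le> M" if "x \<in> F" for x
    unfolding M_def ord_len_def F_def[symmetric] using finF that by simp
  obtain xm where xm: "xm \<in> F" "fact_len xm = m" using mF by auto
  obtain xM where xM: "xM \<in> F" "fact_len xM = M" using MF by auto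
  have P1: "f + m*e \<in> S" using inS[OF xm(1)] xm(2) by simp
  have P2: "f + M*e \<in> S" using inS[OF xM(1)] xM(2) by simp
  have P3: "adj e as (f + m*e + k*e) = int f" for k
  proof -
    have "ord_len SG (f + (m+k)*e) = m + k" using ordN[OF xm(1)] xm(2) by simp
    thus ?thesis unfolding adj_def SG_def by (simp add: algebra_simps)
  qed
  have P4: "d_max SG (f + M*e + k*e) = num_fact D f" for k
  proof -
    define N where "N = M + k"
    have n: "f + M*e + k*e = f + N*e" unfolding N_def by (simp add: algebra_simps)
    define \<phi> where "\<phi> = (\<lambda>x. (N - sum_list (tl x)) # tl x)"
    have ordv: "ord_len SG (f + N*e) = N" using ordN[OF xM(1)] xM(2) unfolding N_def by simp
    have set_eq: "{c \<in> factorizations SG (f + N*e). fact_len c = ord_len SG (f + N*e)} = \<phi> ` F"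
    proof
      show "\<phi> ` F \<subseteq> {c \<in> factorizations SG (f + N*e). fact_len c = ord_len SG (f + N*e)}"
      proof
        fix c assume "c \<in> \<phi> ` F"
        then obtain x where x: "x \<in> F" "c = \<phi> x" by blast
        have "fact_len x \<le> N" using Mge[OF x(1)] unfolding N_def by simp
        from G2[OF x(1) this] show "c \<in> {c \<in> factorizations SG (f + N*e). fact_len c = ord_len SG (f + N*e)}"
          unfolding ordv x(2) \<phi>_def by simp
      qed
      show "{c \<in> factorizations SG (f + N*e). fact_len c = ord_len SG (f + N*e)} \<subseteq> \<phi> ` F"
      proof
        fix c assume "c \<in> {c \<in> factorizations SG (f + N*e). fact_len c = ord_len SG (f + N*e)}"
        hence "0 # tl c \<in> F \<and> c = (N - sum_list (tl c)) # tl c" using G3 ordv by auto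
        hence "0 # tl c \<in> F" "c = \<phi> (0 # tl c)" unfolding \<phi>_def by auto
        thus "c \<in> \<phi> ` F" by (rule rev_image_eqI)
      qed
    qed
    have inj: "inj_on \<phi> F"
    proof
      fix x y assume "x \<in> F" "y \<in> F" "\<phi> x = \<phi> y"
      hence "tl x = tl y" unfolding \<phi>_def by simp
      moreover have "x = 0 # tl x" "y = 0 # tl y" using Fform \<open>x \<in> F\<close> \<open>y \<in> F\<close> by blast+
      ultimately show "x = y" by simp
    qed
    show ?thesis unfolding d_max_def num_fact_def n set_eq F_def[symmetric]
      using card_image[OF inj] by simp
  qed
  show ?thesis using P1 P2 P3 P4 unfolding m_def M_def D_def SG_def by auto
qed

end
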